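(* Let $\{a_n\},\{\rho_n\},\{\hat a_n\},\{\hat\rho_n\}$ ($n\ge1$) be sequences of positive numbers such that $\{\rho_n\}$ and $\{\hat\rho_n\}$ are strictly increasing with $\rho_n\to+\infty$, $\hat\rho_n\to+\infty$, and $\sum_{n\ge1}a_n\rho_n^{-2}<\infty$, $\sum_{n\ge1}\hat a_n\hat\rho_n^{-2}<\infty$. Let $\mu\in\mathbb R$, $\sigma\ge 0$ and let $\phi$ be the real meromorphic function \[ \phi(z)=\tfrac12\sigma^2z^2+\mu z+z^2\sum_{n\ge1}\frac{a_n}{\rho_n(\rho_n-z)}+z^2\sum_{n\ge1}\frac{\hat a_n}{\hat\rho_n(\hat\rho_n+z)}, \] (the Laplace exponent $\ln\mathbb E[e^{zX_1}]$ of the Lévy process $X$ with Gaussian coefficient $\sigma$, mean $\mathbb E[X_1]=\mu$ and Lévy density $\pi(x)=\mathbf 1(x>0)\sum_{n}a_n\rho_ne^{-\rho_nx}+\mathbf 1(x<0)\sum_n\hat a_n\hat\rho_ne^{\hat\rho_nx}$). Let $q>0$. Then the equation $\phi(z)=q$ has solutions $\{\zeta_n,-\hat\zeta_n\}_{n\ge1}$, where $\{\zeta_n\}_{n\ge1}$ and $\{\hat\zeta_n\}_{n\ge1}$ are sequences of positive numbers satisfying the interlacing property \[ 0<\zeta_1<\rho_1<\zeta_2<\rho_2<\cdots,\qquad 0<\hat\zeta_1<\hat\rho_1<\hat\zeta_2<\hat\rho_2<\cdots. \]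
   Context: $\mathbf 1(\cdot)$ denotes the indicator function. *)

theory Defs
  imports Complex_Main
begin

text \<open>Sequences indexed by n >= 1 in the paper are represented as functions on nat
  indexed from 0, i.e. a k stands for a_(k+1).\<close>

text \<open>The Laplace exponent phi(z), as a function on the complex plane.
  It is meaningful away from the poles rho_n and -rhohat_n.\<close>

definition laplace_exponent ::
  "real \<Rightarrow> real \<Rightarrow> (nat \<Rightarrow> real) \<Rightarrow> (nat \<Rightarrow> real) \<Rightarrow> (nat \<Rightarrow> real) \<Rightarrow> (nat \<Rightarrow> real)
   \<Rightarrow> complex \<Rightarrow> complex" where
  "laplace_exponent \<sigma> \<mu> a \<rho> ah \<rho>h z =
     complex_of_real (\<sigma>^2 / 2) * z^2 + complex_of_real \<mu> * z
     + z^2 * (\<Sum>n. complex_of_real (a n) / (complex_of_real (\<rho> n) * (complex_of_real (\<rho> n) - z)))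
     + z^2 * (\<Sum>n. complex_of_real (ah n) / (complex_of_real (\<rho>h n) * (complex_of_real (\<rho>h n) + z)))"

definition laplace_poles :: "(nat \<Rightarrow> real) \<Rightarrow> (nat \<Rightarrow> real) \<Rightarrow> complex set" where
  "laplace_poles \<rho> \<rho>h = range (\<lambda>n. complex_of_real (\<rho> n)) \<union> range (\<lambda>n. - complex_of_real (\<rho>h n))"

end

theory Submission
  imports Defs "HOL-Analysis.Analysis"
begin


lemma term_bound:
  fixes z :: "'a::real_normed_field"
  assumes r: "r > 0" "r \<ge> 2 * norm z"
  shows "norm (of_real c / (of_real r * (of_real r - z))) \<le> 2 * \<bar>c\<bar> / r^2"
proof -
  have "norm (of_real r - z) \<ge> r - norm z"
    using norm_triangle_ineq2[of "of_real r" z] r by simp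
  hence n: "norm (of_real r - z) \<ge> r/2" using r by linarith
  have "norm (of_real c / (of_real r * (of_real r - z))) = \<bar>c\<bar> / (r * norm (of_real r - z))"
    using r by (simp add: norm_divide norm_mult)
  also have "\<dots> \<le> \<bar>c\<bar> / (r * (r/2))"
  proof (rule divide_left_mono)
    show "r * (r/2) \<le> r * norm (of_real r - z)" using r n by (intro mult_left_mono) auto
    have "0 < r * norm (of_real r - z)" using r n by (intro mult_pos_pos) auto
    moreover have "0 < r * (r/2)" using r by simp
    ultimately show "0 < r * norm (of_real r - z) * (r * (r/2))" by (rule mult_pos_pos)
  qed simp
  also have "\<dots> = 2 * \<bar>c\<bar> / r^2" by (simp add: power2_eq_square)
  finally show ?thesis .
qed

lemma eventually_big:
  assumes "filterlim r at_top sequentially"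
  shows "\<exists>N. \<forall>k\<ge>N. r k \<ge> (C::real)"
  using assms unfolding filterlim_at_top eventually_sequentially by blast

lemma summable_term:
  fixes z :: "'a::{real_normed_field,banach}"
  assumes pos: "\<And>k. r k > 0" and lim: "filterlim r at_top sequentially"
    and s: "summable (\<lambda>k. c k / (r k)^2)" and c: "\<And>k. c k \<ge> 0"
  shows "summable (\<lambda>k. of_real (c k) / (of_real (r k) * (of_real (r k) - z)))"
proof (rule summable_comparison_test_ev)
  obtain N where N: "\<forall>k\<ge>N. r k \<ge> 2 * norm z" using eventually_big[OF lim] by blast
  show "\<forall>\<^sub>F k in sequentially. norm (of_real (c k) / (of_real (r k) * (of_real (r k) - z))) \<le> 2 * c k / (r k)^2"
    unfolding eventually_sequentially using N term_bound[OF pos] c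
    by (metis abs_of_nonneg)
  show "summable (\<lambda>k. 2 * c k / (r k)^2)" using summable_mult[OF s, of 2] by (simp add: mult.assoc)
qed

definition Sm :: "(nat \<Rightarrow> real) \<Rightarrow> (nat \<Rightarrow> real) \<Rightarrow> real \<Rightarrow> real" where
  "Sm c r x = (\<Sum>k. c k / (r k * (r k - x)))"

lemma summable_real_term:
  assumes pos: "\<And>k. r k > 0" and lim: "filterlim r at_top sequentially"
    and s: "summable (\<lambda>k. c k / (r k)^2)" and c: "\<And>k. c k \<ge> 0"
  shows "summable (\<lambda>k. c k / (r k * (r k - (x::real))))"
  using summable_term[OF pos lim s c, of x] by simp

lemma Sm_isCont:
  assumes pos: "\<And>k. r k > 0" and lim: "filterlim r at_top sequentially"
    and s: "summable (\<lambda>k. c k / (r k)^2)" and c: "\<And>k. c k \<ge> 0"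
    and x0: "\<And>k. r k = x0 \<Longrightarrow> c k = 0"
  shows "isCont (Sm c r) x0"
proof -
  obtain N where N: "\<forall>k\<ge>N. r k \<ge> 2 * (\<bar>x0\<bar> + 1)" using eventually_big[OF lim] by blast
  define T where "T x = (\<Sum>k. c (k+N) / (r (k+N) * (r (k+N) - x)))" for x
  have eq: "Sm c r = (\<lambda>x. T x + (\<Sum>k<N. c k / (r k * (r k - x))))"
    unfolding Sm_def T_def
    by (rule ext, rule suminf_split_initial_segment[OF summable_real_term[OF pos lim s c]])
  have "continuous_on (ball x0 1) T"
  proof (rule uniform_limit_theorem)
    show "uniform_limit (ball x0 1) (\<lambda>n x. \<Sum>i<n. c (i+N) / (r (i+N) * (r (i+N) - x))) T sequentially"
      unfolding T_def
    proof (rule Weierstrass_m_test)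
      fix n and x :: real assume x: "x \<in> ball x0 1"
      hence "\<bar>x\<bar> \<le> \<bar>x0\<bar> + 1" by (auto simp: dist_real_def)
      hence "r (n+N) \<ge> 2 * norm x" using N[rule_format, of "n+N"] by simp
      from term_bound[OF pos this, of "c (n+N)"] c[of "n+N"]
      show "norm (c (n+N) / (r (n+N) * (r (n+N) - x))) \<le> 2 * c (n+N) / (r (n+N))^2" by simp
    next
      show "summable (\<lambda>n. 2 * c (n+N) / (r (n+N))^2)"
        using summable_mult[OF summable_ignore_initial_segment[OF s, of N], of 2] by (simp add: mult.assoc)
    qed
    show "\<forall>\<^sub>F n in sequentially. continuous_on (ball x0 1) (\<lambda>x. \<Sum>i<n. c (i+N) / (r (i+N) * (r (i+N) - x)))"
    proof (intro always_eventually allI continuous_on_sum ballI continuous_intros)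
      fix n i x assume x: "x \<in> ball x0 1"
      hence "\<bar>x\<bar> \<le> \<bar>x0\<bar> + 1" by (auto simp: dist_real_def)
      hence "r (i+N) > x" using N pos[of "i+N"] by (smt (verit) le_add2)
      thus "r (i+N) * (r (i+N) - x) \<noteq> 0" using pos[of "i+N"] by simp
    qed
    show "\<not> trivial_limit sequentially" by simp
  qed
  hence cT: "isCont T x0" using continuous_on_eq_continuous_at[of "ball x0 1" T] by simp
  have cF: "isCont (\<lambda>x. \<Sum>k<N. c k / (r k * (r k - x))) x0"
  proof (intro continuous_sum)
    fix k assume "k \<in> {..<N}"
    show "isCont (\<lambda>x. c k / (r k * (r k - x))) x0"
    proof (cases "c k = 0")
      case True thus ?thesis by simp
    next
      case False
      hence "r k \<noteq> x0" using x0 by blast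
      thus ?thesis using pos[of k] by (intro continuous_intros) auto
    qed
  qed
  show ?thesis unfolding eq by (rule isCont_add[OF cT cF])
qed

lemma summable_upd:
  fixes c r :: "nat \<Rightarrow> real"
  assumes s: "summable (\<lambda>k. c k / (r k)^2)" and c: "\<And>k. c k \<ge> 0"
  shows "summable (\<lambda>k. (c(m:=0)) k / (r k)^2)"
proof (rule summable_comparison_test_ev[of _ "\<lambda>k. c k / (r k)^2"])
  show "\<forall>\<^sub>F k in sequentially. norm ((c(m:=0)) k / (r k)^2) \<le> c k / (r k)^2"
    by (intro always_eventually allI) (auto simp: c)
qed (rule s)

lemma Sm_remove:
  assumes pos: "\<And>k. r k > 0" and lim: "filterlim r at_top sequentially"
    and s: "summable (\<lambda>k. c k / (r k)^2)" and c: "\<And>k. c k \<ge> 0"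
  shows "Sm c r x = Sm (c(m:=0)) r x + c m / (r m * (r m - x))"
proof -
  let ?f = "\<lambda>k. c k / (r k * (r k - x))"
  let ?h = "\<lambda>k. if k = m then ?f k else 0"
  have f: "?f sums Sm c r x" unfolding Sm_def using summable_real_term[OF pos lim s c] by (simp add: summable_sums)
  have "(\<lambda>k. ?f k - ?h k) sums (Sm c r x - ?f m)" by (rule sums_diff[OF f sums_single])
  moreover have "(\<lambda>k. ?f k - ?h k) = (\<lambda>k. (c(m:=0)) k / (r k * (r k - x)))" by auto
  ultimately have "Sm (c(m:=0)) r x = Sm c r x - ?f m" unfolding Sm_def by (simp add: sums_iff)
  thus ?thesis by simp
qed

lemma term_mono:
  fixes a r x y :: real
  assumes "a \<ge> 0" "r \<noteq> 0" "x < y" "(r - x) * (r - y) > 0"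
  shows "x * (a / (r * (r - x))) \<le> y * (a / (r * (r - y)))"
proof -
  have "r - x \<noteq> 0" "r - y \<noteq> 0" using assms(4) by auto
  hence "x * (a / (r * (r - x))) - y * (a / (r * (r - y))) = a * (x - y) / ((r - x) * (r - y))"
    using assms(2) by (simp add: divide_simps) (simp add: algebra_simps)
  moreover have "a * (x - y) / ((r - x) * (r - y)) \<le> 0"
    using assms by (intro divide_nonpos_pos mult_nonneg_nonpos) auto
  ultimately show ?thesis by simp
qed

lemma term_mono2:
  fixes a r x y :: real
  assumes "a \<ge> 0" "r > 0" "0 < x" "x < y"
  shows "x * (a / (r * (r - - x))) \<le> y * (a / (r * (r - - y)))"
proof -
  have "x * (a / ((-r) * ((-r) - x))) \<le> y * (a / ((-r) * ((-r) - y)))"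
  proof -
    have "(-r - x) * (-r - y) = (r + x) * (r + y)" by (simp add: algebra_simps)
    also have "\<dots> > 0" using assms by simp
    finally have p: "(-r - x) * (-r - y) > 0" .
    show ?thesis by (rule term_mono[OF assms(1) _ assms(4) p]) (use assms in simp)
  qed
  moreover have "(-r) * ((-r) - t) = r * (r - - t)" for t by (simp add: algebra_simps)
  ultimately show ?thesis by (simp only:)
qed

definition phiR :: "real \<Rightarrow> real \<Rightarrow> (nat \<Rightarrow> real) \<Rightarrow> (nat \<Rightarrow> real) \<Rightarrow> (nat \<Rightarrow> real) \<Rightarrow> (nat \<Rightarrow> real) \<Rightarrow> real \<Rightarrow> real" where
  "phiR \<sigma> \<mu> a \<rho> ah \<rho>h x = \<sigma>^2/2 * x^2 + \<mu> * x + x^2 * Sm a \<rho> x + x^2 * Sm ah \<rho>h (-x)"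

lemma phiR_swap: "phiR \<sigma> \<mu> a \<rho> ah \<rho>h (-x) = phiR \<sigma> (-\<mu>) ah \<rho>h a \<rho> x"
  unfolding phiR_def by simp

lemma phi_mono:
  assumes a: "\<And>k. a k \<ge> 0" and rp: "\<And>k. \<rho> k > 0" and rl: "filterlim \<rho> at_top sequentially"
    and sa: "summable (\<lambda>k. a k / (\<rho> k)^2)"
    and ah: "\<And>k. ah k \<ge> 0" and rhp: "\<And>k. \<rho>h k > 0" and rhl: "filterlim \<rho>h at_top sequentially"
    and sah: "summable (\<lambda>k. ah k / (\<rho>h k)^2)"
    and q: "q > 0" and xy: "0 < x" "x < y" and side: "\<And>k. (\<rho> k - x) * (\<rho> k - y) > 0"
  shows "(phiR \<sigma> \<mu> a \<rho> ah \<rho>h x - q) / x < (phiR \<sigma> \<mu> a \<rho> ah \<rho>h y - q) / y"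
proof -
  have e: "(phiR \<sigma> \<mu> a \<rho> ah \<rho>h t - q) / t = \<sigma>^2/2 * t + \<mu>
      + (\<Sum>k. t * (a k / (\<rho> k * (\<rho> k - t)))) + (\<Sum>k. t * (ah k / (\<rho>h k * (\<rho>h k - - t)))) - q / t"
    if "t > 0" for t
  proof -
    have "(\<Sum>k. t * (a k / (\<rho> k * (\<rho> k - t)))) = t * Sm a \<rho> t"
      unfolding Sm_def by (rule suminf_mult[OF summable_real_term[OF rp rl sa a]])
    moreover have "(\<Sum>k. t * (ah k / (\<rho>h k * (\<rho>h k - - t)))) = t * Sm ah \<rho>h (-t)"
      unfolding Sm_def by (rule suminf_mult[OF summable_real_term[OF rhp rhl sah ah]])
    ultimately show ?thesis using that unfolding phiR_def
      by (simp add: field_simps power2_eq_square)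
  qed
  have s1: "(\<Sum>k. x * (a k / (\<rho> k * (\<rho> k - x)))) \<le> (\<Sum>k. y * (a k / (\<rho> k * (\<rho> k - y))))"
  proof (rule suminf_le)
    fix k show "x * (a k / (\<rho> k * (\<rho> k - x))) \<le> y * (a k / (\<rho> k * (\<rho> k - y)))"
      using a[of k] rp[of k] xy side[of k] by (intro term_mono) auto
  qed (intro summable_mult summable_real_term[OF rp rl sa a])+
  have s2: "(\<Sum>k. x * (ah k / (\<rho>h k * (\<rho>h k - - x)))) \<le> (\<Sum>k. y * (ah k / (\<rho>h k * (\<rho>h k - - y))))"
  proof (rule suminf_le)
    fix k show "x * (ah k / (\<rho>h k * (\<rho>h k - - x))) \<le> y * (ah k / (\<rho>h k * (\<rho>h k - - y)))"
      using ah[of k] rhp[of k] xy by (intro term_mono2) auto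
  qed (intro summable_mult summable_real_term[OF rhp rhl sah ah])+
  have s3: "- q / x < - q / y" using q xy by (simp add: divide_simps)
  have s4: "\<sigma>^2/2 * x \<le> \<sigma>^2/2 * y" using xy by (intro mult_left_mono) auto
  show ?thesis unfolding e[OF xy(1)] using xy e[of y] s1 s2 s3 s4 by simp
qed

lemma Sm_neg_isCont:
  assumes pos: "\<And>k. r k > 0" and lim: "filterlim r at_top sequentially"
    and s: "summable (\<lambda>k. c k / (r k)^2)" and c: "\<And>k. c k \<ge> 0" and x: "x \<ge> 0"
  shows "isCont (\<lambda>x. Sm c r (-x)) x"
proof -
  have h: "isCont (Sm c r) (- x)"
    by (rule Sm_isCont[OF pos lim s c]) (use pos x in \<open>smt (verit)\<close>)
  have "isCont (\<lambda>x. - x) x" by (intro continuous_intros)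
  from isCont_o2[OF this, of "Sm c r"] h show ?thesis by simp
qed

lemma exist0:
  assumes a: "\<And>k. a k > 0" and rp: "\<And>k. \<rho> k > 0" and rm: "strict_mono \<rho>"
    and rl: "filterlim \<rho> at_top sequentially"
    and sa: "summable (\<lambda>k. a k / (\<rho> k)^2)"
    and ah: "\<And>k. ah k \<ge> 0" and rhp: "\<And>k. \<rho>h k > 0" and rhl: "filterlim \<rho>h at_top sequentially"
    and sah: "summable (\<lambda>k. ah k / (\<rho>h k)^2)"
    and q: "q > 0"
  shows "\<exists>x. 0 < x \<and> x < \<rho> 0 \<and> phiR \<sigma> \<mu> a \<rho> ah \<rho>h x = q"
proof -
  define hi where "hi = \<rho> 0"
  define c' where "c' = a(0:=0)"
  have a0: "\<And>k. a k \<ge> 0" using a less_imp_le by blast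
  have c'0: "\<And>k. c' k \<ge> 0" unfolding c'_def using a0 by simp
  have sc': "summable (\<lambda>k. c' k / (\<rho> k)^2)" unfolding c'_def by (rule summable_upd[OF sa a0])
  define R where "R x = \<sigma>^2/2*x^2 + \<mu>*x + x^2*Sm c' \<rho> x + x^2*Sm ah \<rho>h (-x) - q" for x
  define G where "G x = (hi - x) * R x + x^2 * a 0 / hi" for x
  have hi: "hi > 0" unfolding hi_def using rp by simp
  have "continuous_on {0..hi} G"
  proof (rule continuous_at_imp_continuous_on, rule ballI)
    fix x assume x: "x \<in> {0..hi}"
    have c1: "isCont (Sm c' \<rho>) x"
    proof (rule Sm_isCont[OF rp rl sc' c'0])
      fix k assume k: "\<rho> k = x"
      show "c' k = 0"
      proof (cases k)
        case 0 thus ?thesis unfolding c'_def by simp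
      next
        case (Suc j)
        hence "\<rho> 0 < \<rho> k" using strict_monoD[OF rm] by simp
        thus ?thesis using k x unfolding hi_def by simp
      qed
    qed
    have c2: "isCont (\<lambda>x. Sm ah \<rho>h (-x)) x" using Sm_neg_isCont[OF rhp rhl sah ah] x by simp
    show "isCont G x" unfolding G_def R_def
      using hi by (intro continuous_intros c1 c2) (auto simp: hi_def)
  qed
  moreover have "G 0 \<le> 0" unfolding G_def R_def using hi q by (simp add: mult_nonneg_nonpos)
  moreover have "0 \<le> G hi" unfolding G_def R_def using hi a0[of 0] by simp
  ultimately obtain x where x: "0 \<le> x" "x \<le> hi" "G x = 0" using IVT'[of G 0 0 hi] hi by auto
  have "x \<noteq> 0" using x(3) hi q unfolding G_def R_def by auto
  moreover have "x \<noteq> hi" using x(3) hi a[of 0] unfolding G_def R_def by auto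
  ultimately have x0: "0 < x" "x < hi" using x by auto
  have "phiR \<sigma> \<mu> a \<rho> ah \<rho>h x - q = R x + x^2 * (a 0 / (hi * (hi - x)))"
    unfolding phiR_def R_def Sm_remove[OF rp rl sa a0, of x 0] c'_def hi_def by (simp add: algebra_simps)
  hence "(hi - x) * (phiR \<sigma> \<mu> a \<rho> ah \<rho>h x - q) = G x"
    unfolding G_def using x0 hi by (simp add: field_simps)
  hence "phiR \<sigma> \<mu> a \<rho> ah \<rho>h x = q" using x(3) x0 by simp
  thus ?thesis using x0 hi_def by auto
qed

lemma existSuc:
  assumes a: "\<And>k. a k > 0" and rp: "\<And>k. \<rho> k > 0" and rm: "strict_mono \<rho>"
    and rl: "filterlim \<rho> at_top sequentially"
    and sa: "summable (\<lambda>k. a k / (\<rho> k)^2)"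
    and ah: "\<And>k. ah k \<ge> 0" and rhp: "\<And>k. \<rho>h k > 0" and rhl: "filterlim \<rho>h at_top sequentially"
    and sah: "summable (\<lambda>k. ah k / (\<rho>h k)^2)"
    and q: "q > 0"
  shows "\<exists>x. \<rho> m < x \<and> x < \<rho> (Suc m) \<and> phiR \<sigma> \<mu> a \<rho> ah \<rho>h x = q"
proof -
  define lo where "lo = \<rho> m"
  define hi where "hi = \<rho> (Suc m)"
  define c1 where "c1 = a(m:=0)"
  define c' where "c' = c1(Suc m:=0)"
  have a0: "\<And>k. a k \<ge> 0" using a less_imp_le by blast
  have c10: "\<And>k. c1 k \<ge> 0" unfolding c1_def using a0 by simp
  have sc1: "summable (\<lambda>k. c1 k / (\<rho> k)^2)" unfolding c1_def by (rule summable_upd[OF sa a0])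
  have c'0: "\<And>k. c' k \<ge> 0" unfolding c'_def using c10 by simp
  have sc': "summable (\<lambda>k. c' k / (\<rho> k)^2)" unfolding c'_def by (rule summable_upd[OF sc1 c10])
  define R where "R x = \<sigma>^2/2*x^2 + \<mu>*x + x^2*Sm c' \<rho> x + x^2*Sm ah \<rho>h (-x) - q" for x
  define G where "G x = (hi - x) * (x - lo) * R x - (hi - x) * x^2 * a m / lo + (x - lo) * x^2 * a (Suc m) / hi" for x
  have lo: "lo > 0" unfolding lo_def using rp by simp
  have lohi: "lo < hi" unfolding lo_def hi_def using strict_monoD[OF rm] by simp
  have "continuous_on {lo..hi} G"
  proof (rule continuous_at_imp_continuous_on, rule ballI)
    fix x assume x: "x \<in> {lo..hi}"
    have i1: "isCont (Sm c' \<rho>) x"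
    proof (rule Sm_isCont[OF rp rl sc' c'0])
      fix k assume k: "\<rho> k = x"
      show "c' k = 0"
      proof -
        have "\<not> k < m" using strict_monoD[OF rm, of k m] k x unfolding lo_def by auto
        moreover have "\<not> Suc m < k" using strict_monoD[OF rm, of "Suc m" k] k x unfolding hi_def by auto
        ultimately have "k = m \<or> k = Suc m" by auto
        thus ?thesis unfolding c'_def c1_def by auto
      qed
    qed
    have i2: "isCont (\<lambda>x. Sm ah \<rho>h (-x)) x" using Sm_neg_isCont[OF rhp rhl sah ah] x lo by simp
    show "isCont G x" unfolding G_def R_def
      using lo lohi by (intro continuous_intros i1 i2) auto
  qed
  moreover have "G lo \<le> 0" unfolding G_def R_def using lo lohi a0[of m]
    by (simp add: mult_nonneg_nonneg)
  moreover have "0 \<le> G hi" unfolding G_def R_def using lo lohi a0[of "Suc m"] by simp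
  ultimately obtain x where x: "lo \<le> x" "x \<le> hi" "G x = 0" using IVT'[of G lo 0 hi] lohi by auto
  have "x \<noteq> lo" using x(3) lo lohi a[of m] unfolding G_def R_def by (auto simp: power2_eq_square)
  moreover have "x \<noteq> hi" using x(3) lo lohi a[of "Suc m"] unfolding G_def R_def by (auto simp: power2_eq_square)
  ultimately have x0: "lo < x" "x < hi" using x by auto
  have e1: "Sm a \<rho> x = Sm c1 \<rho> x + a m / (lo * (lo - x))"
    unfolding c1_def lo_def by (rule Sm_remove[OF rp rl sa a0])
  have "c1 (Suc m) = a (Suc m)" by (simp add: c1_def)
  hence e2: "Sm c1 \<rho> x = Sm c' \<rho> x + a (Suc m) / (hi * (hi - x))"
    using Sm_remove[OF rp rl sc1 c10, of x "Suc m"] unfolding c'_def hi_def by simp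
  have "Sm a \<rho> x = Sm c' \<rho> x + a m / (lo * (lo - x)) + a (Suc m) / (hi * (hi - x))"
    using e1 e2 by simp
  hence "phiR \<sigma> \<mu> a \<rho> ah \<rho>h x - q = R x + x^2 * (a m / (lo * (lo - x))) + x^2 * (a (Suc m) / (hi * (hi - x)))"
    unfolding phiR_def R_def by (simp add: algebra_simps)
  moreover have t1: "(hi - x) * (x - lo) * (x^2 * (a m / (lo * (lo - x)))) = - ((hi - x) * x^2 * a m / lo)"
    using x0 lo by (simp add: field_simps)
  moreover have t2: "(hi - x) * (x - lo) * (x^2 * (a (Suc m) / (hi * (hi - x)))) = (x - lo) * x^2 * a (Suc m) / hi"
    using x0 lo by (simp add: field_simps)
  ultimately have "(hi - x) * (x - lo) * (phiR \<sigma> \<mu> a \<rho> ah \<rho>h x - q) = G x"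
    unfolding G_def by (simp add: distrib_left)
  hence "phiR \<sigma> \<mu> a \<rho> ah \<rho>h x = q" using x(3) x0 by simp
  thus ?thesis using x0 lo_def hi_def by auto
qed

lemma pos_side:
  assumes a: "\<And>k. a k > 0" and rp: "\<And>k. \<rho> k > 0" and rm: "strict_mono \<rho>"
    and rl: "filterlim \<rho> at_top sequentially"
    and sa: "summable (\<lambda>k. a k / (\<rho> k)^2)"
    and ah: "\<And>k. ah k \<ge> 0" and rhp: "\<And>k. \<rho>h k > 0" and rhl: "filterlim \<rho>h at_top sequentially"
    and sah: "summable (\<lambda>k. ah k / (\<rho>h k)^2)"
    and q: "q > 0"
  shows "\<exists>\<zeta>. (\<forall>n. 0 < \<zeta> n \<and> \<zeta> n < \<rho> n \<and> \<rho> n < \<zeta> (Suc n))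
     \<and> (\<forall>n. phiR \<sigma> \<mu> a \<rho> ah \<rho>h (\<zeta> n) = q) \<and> (\<forall>n k. \<zeta> n \<noteq> \<rho> k)
     \<and> (\<forall>x. 0 < x \<longrightarrow> (\<forall>k. x \<noteq> \<rho> k) \<longrightarrow> phiR \<sigma> \<mu> a \<rho> ah \<rho>h x = q \<longrightarrow> x \<in> range \<zeta>)"
proof -
  define lo where "lo n = (if n = 0 then 0 else \<rho> (n - 1))" for n
  have a0: "\<And>k. a k \<ge> 0" using a less_imp_le by blast
  have ex: "\<forall>n. \<exists>x. lo n < x \<and> x < \<rho> n \<and> phiR \<sigma> \<mu> a \<rho> ah \<rho>h x = q"
  proof
    fix n show "\<exists>x. lo n < x \<and> x < \<rho> n \<and> phiR \<sigma> \<mu> a \<rho> ah \<rho>h x = q"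
    proof (cases n)
      case 0 thus ?thesis using exist0[OF a rp rm rl sa ah rhp rhl sah q] unfolding lo_def by simp
    next
      case (Suc m) thus ?thesis using existSuc[OF a rp rm rl sa ah rhp rhl sah q, of m] unfolding lo_def by simp
    qed
  qed
  then obtain \<zeta> where z: "\<And>n. lo n < \<zeta> n \<and> \<zeta> n < \<rho> n \<and> phiR \<sigma> \<mu> a \<rho> ah \<rho>h (\<zeta> n) = q"
    by metis
  have lo0: "lo n \<ge> 0" for n unfolding lo_def using rp[of "n - 1"] by simp
  have loc: "(k < n \<longrightarrow> \<rho> k < x) \<and> (n \<le> k \<longrightarrow> x < \<rho> k)" if "lo n < x" "x < \<rho> n" for n k x
  proof (intro conjI impI)
    assume "k < n"
    hence "\<rho> k \<le> \<rho> (n - 1)" using strict_mono_less_eq[OF rm] by simp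
    thus "\<rho> k < x" using that \<open>k < n\<close> unfolding lo_def by simp
  next
    assume "n \<le> k"
    hence "\<rho> n \<le> \<rho> k" using strict_mono_less_eq[OF rm] by simp
    thus "x < \<rho> k" using that by simp
  qed
  have uniq: "x = y" if "lo n < x" "x < \<rho> n" "lo n < y" "y < \<rho> n"
    "phiR \<sigma> \<mu> a \<rho> ah \<rho>h x = q" "phiR \<sigma> \<mu> a \<rho> ah \<rho>h y = q" for n x y
  proof -
    have side: "(\<rho> k - u) * (\<rho> k - v) > 0" if "lo n < u" "u < \<rho> n" "lo n < v" "v < \<rho> n" for k u v
    proof (cases "k < n")
      case True thus ?thesis using loc[OF that(1,2), of k] loc[OF that(3,4), of k]
        by (intro mult_neg_neg) auto
    next
      case False thus ?thesis using loc[OF that(1,2), of k] loc[OF that(3,4), of k]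
        by (intro mult_pos_pos) auto
    qed
    show "x = y"
    proof (rule ccontr)
      assume "x \<noteq> y"
      then consider "x < y" | "y < x" by linarith
      thus False
      proof cases
        case 1
        from phi_mono[OF a0 rp rl sa ah rhp rhl sah q _ 1, of \<sigma> \<mu>] side[OF that(1-4)] lo0[of n] that
        show False by simp
      next
        case 2
        from phi_mono[OF a0 rp rl sa ah rhp rhl sah q _ 2, of \<sigma> \<mu>] side[OF that(3,4,1,2)] lo0[of n] that
        show False by simp
      qed
    qed
  qed
  have "\<forall>n. 0 < \<zeta> n \<and> \<zeta> n < \<rho> n \<and> \<rho> n < \<zeta> (Suc n)"
  proof
    fix n
    have "lo (Suc n) = \<rho> n" unfolding lo_def by simp
    thus "0 < \<zeta> n \<and> \<zeta> n < \<rho> n \<and> \<rho> n < \<zeta> (Suc n)" using z[of n] z[of "Suc n"] lo0[of n] by simp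
  qed
  moreover have "\<forall>n k. \<zeta> n \<noteq> \<rho> k"
  proof (intro allI)
    fix n k
    show "\<zeta> n \<noteq> \<rho> k" using loc[of n "\<zeta> n" k] z[of n] by (cases "k < n") auto
  qed
  moreover have "\<forall>x. 0 < x \<longrightarrow> (\<forall>k. x \<noteq> \<rho> k) \<longrightarrow> phiR \<sigma> \<mu> a \<rho> ah \<rho>h x = q \<longrightarrow> x \<in> range \<zeta>"
  proof (intro allI impI)
    fix x assume x: "0 < x" "\<forall>k. x \<noteq> \<rho> k" "phiR \<sigma> \<mu> a \<rho> ah \<rho>h x = q"
    obtain N where N: "\<forall>k\<ge>N. \<rho> k \<ge> x + 1" using eventually_big[OF rl] by blast
    hence "x < \<rho> N" by (smt (verit) order_refl)
    hence ex: "\<exists>k. x < \<rho> k" by blast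
    define n where "n = (LEAST k. x < \<rho> k)"
    have hn: "x < \<rho> n" unfolding n_def by (rule LeastI_ex[OF ex])
    have ln: "lo n < x"
    proof (cases n)
      case 0 thus ?thesis using x unfolding lo_def by simp
    next
      case (Suc j)
      have "\<not> x < \<rho> j" using not_less_Least[of j "\<lambda>k. x < \<rho> k"] Suc unfolding n_def by simp
      hence "\<rho> j < x" using x(2)[rule_format, of j] by simp
      thus ?thesis using Suc unfolding lo_def by simp
    qed
    have "x = \<zeta> n" using uniq[OF ln hn _ _ x(3)] z[of n] by simp
    thus "x \<in> range \<zeta>" by simp
  qed
  ultimately show ?thesis using z by blast
qed



lemma Imc: "Im (complex_of_real c * w) = c * Im w" by simp

lemma Im_term1:
  assumes "r > 0"
  shows "Im (z * (complex_of_real a / (complex_of_real r * (complex_of_real r - z)))) = a * Im z / ((r - Re z)^2 + (Im z)^2)"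
proof -
  have "z * (complex_of_real a / (complex_of_real r * (complex_of_real r - z))) = complex_of_real (a / r) * (z / (complex_of_real r - z))"
    using assms by (simp add: field_simps)
  also have "Im \<dots> = (a / r) * Im (z / (complex_of_real r - z))" by (rule Imc)
  also have "Im (z / (complex_of_real r - z)) = r * Im z / ((r - Re z)^2 + (Im z)^2)"
    by (simp add: Im_divide algebra_simps power2_eq_square)
  finally show ?thesis using assms by simp
qed

lemma Im_term2:
  assumes "r > 0"
  shows "Im (z * (complex_of_real a / (complex_of_real r * (complex_of_real r + z)))) = a * Im z / ((r + Re z)^2 + (Im z)^2)"
proof -
  have "z * (complex_of_real a / (complex_of_real r * (complex_of_real r + z))) = complex_of_real (a / r) * (z / (complex_of_real r + z))"
    using assms by (simp add: field_simps)
  also have "Im \<dots> = (a / r) * Im (z / (complex_of_real r + z))" by (rule Imc)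
  also have "Im (z / (complex_of_real r + z)) = r * Im z / ((r + Re z)^2 + (Im z)^2)"
    by (simp add: Im_divide algebra_simps power2_eq_square)
  finally show ?thesis using assms by simp
qed

lemma real_phi:
  assumes a: "\<And>k. a k \<ge> 0" and rp: "\<And>k. \<rho> k > 0" and rl: "filterlim \<rho> at_top sequentially"
    and sa: "summable (\<lambda>k. a k / (\<rho> k)^2)"
    and ah: "\<And>k. ah k \<ge> 0" and rhp: "\<And>k. \<rho>h k > 0" and rhl: "filterlim \<rho>h at_top sequentially"
    and sah: "summable (\<lambda>k. ah k / (\<rho>h k)^2)"
  shows "laplace_exponent \<sigma> \<mu> a \<rho> ah \<rho>h (complex_of_real x) = complex_of_real (phiR \<sigma> \<mu> a \<rho> ah \<rho>h x)"
proof -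
  have h1: "(\<Sum>n. complex_of_real (a n) / (complex_of_real (\<rho> n) * (complex_of_real (\<rho> n) - complex_of_real x)))
      = complex_of_real (Sm a \<rho> x)"
    unfolding Sm_def by (subst suminf_of_real[OF summable_real_term[OF rp rl sa a]]) simp
  have h2: "(\<Sum>n. complex_of_real (ah n) / (complex_of_real (\<rho>h n) * (complex_of_real (\<rho>h n) + complex_of_real x)))
      = complex_of_real (Sm ah \<rho>h (-x))"
    unfolding Sm_def by (subst suminf_of_real[OF summable_real_term[OF rhp rhl sah ah]]) simp
  show ?thesis unfolding laplace_exponent_def phiR_def h1 h2 by simp
qed

lemma nonreal:
  assumes a: "\<And>k. a k \<ge> 0" and rp: "\<And>k. \<rho> k > 0" and rl: "filterlim \<rho> at_top sequentially"
    and sa: "summable (\<lambda>k. a k / (\<rho> k)^2)"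
    and ah: "\<And>k. ah k \<ge> 0" and rhp: "\<And>k. \<rho>h k > 0" and rhl: "filterlim \<rho>h at_top sequentially"
    and sah: "summable (\<lambda>k. ah k / (\<rho>h k)^2)" and q: "q > 0" and z: "Im z \<noteq> 0"
  shows "laplace_exponent \<sigma> \<mu> a \<rho> ah \<rho>h z \<noteq> complex_of_real q"
proof
  assume eq: "laplace_exponent \<sigma> \<mu> a \<rho> ah \<rho>h z = complex_of_real q"
  define y where "y = Im z"
  have z0: "z \<noteq> 0" using z by auto
  define t1 where "t1 n = complex_of_real (a n) / (complex_of_real (\<rho> n) * (complex_of_real (\<rho> n) - z))" for n
  define t2 where "t2 n = complex_of_real (ah n) / (complex_of_real (\<rho>h n) * (complex_of_real (\<rho>h n) + z))" for n
  have s1: "summable t1" unfolding t1_def by (rule summable_term[OF rp rl sa a])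
  have s2: "summable t2" unfolding t2_def using summable_term[OF rhp rhl sah ah, of "-z"] by simp
  define W where "W = complex_of_real (\<sigma>^2/2) * z + complex_of_real \<mu> + z * suminf t1 + z * suminf t2"
  have "laplace_exponent \<sigma> \<mu> a \<rho> ah \<rho>h z = z * W"
    unfolding laplace_exponent_def W_def t1_def t2_def by (simp add: algebra_simps power2_eq_square)
  hence W: "W = complex_of_real q / z" using eq z0 by (simp add: field_simps)
  have I1: "Im (z * suminf t1) = (\<Sum>n. Im (z * t1 n))"
    using suminf_mult[OF s1, of z] Im_suminf[OF summable_mult[OF s1, of z]] by simp
  have I2: "Im (z * suminf t2) = (\<Sum>n. Im (z * t2 n))"
    using suminf_mult[OF s2, of z] Im_suminf[OF summable_mult[OF s2, of z]] by simp
  have P1: "0 \<le> y * Im (z * suminf t1)"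
  proof -
    have sm: "summable (\<lambda>n. Im (z * t1 n))" by (rule summable_Im[OF summable_mult[OF s1]])
    have "y * Im (z * suminf t1) = (\<Sum>n. y * Im (z * t1 n))" unfolding I1 by (rule suminf_mult[OF sm, symmetric])
    also have "\<dots> \<ge> 0"
    proof (rule suminf_nonneg)
      show "summable (\<lambda>n. y * Im (z * t1 n))" by (rule summable_mult[OF sm])
      fix n
      have "0 \<le> a n * (Im z * Im z) / ((\<rho> n - Re z)^2 + (Im z)^2)" using a[of n] by (intro divide_nonneg_nonneg) auto
      thus "0 \<le> y * Im (z * t1 n)" unfolding t1_def Im_term1[OF rp] y_def by (simp add: mult_ac)
    qed
    finally show ?thesis .
  qed
  have P2: "0 \<le> y * Im (z * suminf t2)"
  proof -
    have sm: "summable (\<lambda>n. Im (z * t2 n))" by (rule summable_Im[OF summable_mult[OF s2]])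
    have "y * Im (z * suminf t2) = (\<Sum>n. y * Im (z * t2 n))" unfolding I2 by (rule suminf_mult[OF sm, symmetric])
    also have "\<dots> \<ge> 0"
    proof (rule suminf_nonneg)
      show "summable (\<lambda>n. y * Im (z * t2 n))" by (rule summable_mult[OF sm])
      fix n
      have "0 \<le> ah n * (Im z * Im z) / ((\<rho>h n + Re z)^2 + (Im z)^2)" using ah[of n] by (intro divide_nonneg_nonneg) auto
      thus "0 \<le> y * Im (z * t2 n)" unfolding t2_def Im_term2[OF rhp] y_def by (simp add: mult_ac)
    qed
    finally show ?thesis .
  qed
  have "y * Im W = \<sigma>^2/2 * y^2 + y * Im (z * suminf t1) + y * Im (z * suminf t2)"
    unfolding W_def y_def by (simp add: algebra_simps power2_eq_square)
  hence ge: "y * Im W \<ge> 0" using P1 P2 by simp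
  have "y * Im W = - q * y^2 / ((Re z)^2 + (Im z)^2)"
    unfolding W Im_divide y_def by (simp add: power2_eq_square)
  moreover have "(Re z)^2 + (Im z)^2 > 0" using z by (simp add: add_nonneg_pos)
  moreover have "y^2 > 0" using z y_def by simp
  ultimately have "y * Im W < 0" using q by (simp add: divide_neg_pos mult_pos_pos)
  thus False using ge by simp
qed



theorem proposition3:
  fixes a \<rho> ah \<rho>h :: "nat \<Rightarrow> real" and \<mu> \<sigma> q :: real
  assumes a_pos: "\<And>n. a n > 0" and rho_pos: "\<And>n. \<rho> n > 0"
      and ah_pos: "\<And>n. ah n > 0" and rhoh_pos: "\<And>n. \<rho>h n > 0"
      and rho_mono: "strict_mono \<rho>" and rhoh_mono: "strict_mono \<rho>h"
      and rho_lim: "filterlim \<rho> at_top sequentially"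
      and rhoh_lim: "filterlim \<rho>h at_top sequentially"
      and sum_a: "summable (\<lambda>n. a n / (\<rho> n)^2)"
      and sum_ah: "summable (\<lambda>n. ah n / (\<rho>h n)^2)"
      and sigma: "\<sigma> \<ge> 0"
      and q: "q > 0"
  shows "\<exists>\<zeta> \<zeta>h :: nat \<Rightarrow> real.
           (\<forall>n. 0 < \<zeta> n \<and> \<zeta> n < \<rho> n \<and> \<rho> n < \<zeta> (Suc n)) \<and>
           (\<forall>n. 0 < \<zeta>h n \<and> \<zeta>h n < \<rho>h n \<and> \<rho>h n < \<zeta>h (Suc n)) \<and>
           {z. z \<notin> laplace_poles \<rho> \<rho>h \<and> laplace_exponent \<sigma> \<mu> a \<rho> ah \<rho>h z = complex_of_real q}
             = range (\<lambda>n. complex_of_real (\<zeta> n)) \<union> range (\<lambda>n. - complex_of_real (\<zeta>h n))"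
proof -
  have a0: "\<And>k. a k \<ge> 0" using a_pos less_imp_le by blast
  have ah0: "\<And>k. ah k \<ge> 0" using ah_pos less_imp_le by blast
  obtain \<zeta> where Z: "\<forall>n. 0 < \<zeta> n \<and> \<zeta> n < \<rho> n \<and> \<rho> n < \<zeta> (Suc n)"
     "\<forall>n. phiR \<sigma> \<mu> a \<rho> ah \<rho>h (\<zeta> n) = q" "\<forall>n k. \<zeta> n \<noteq> \<rho> k"
     "\<forall>x. 0 < x \<longrightarrow> (\<forall>k. x \<noteq> \<rho> k) \<longrightarrow> phiR \<sigma> \<mu> a \<rho> ah \<rho>h x = q \<longrightarrow> x \<in> range \<zeta>"
    using pos_side[OF a_pos rho_pos rho_mono rho_lim sum_a ah0 rhoh_pos rhoh_lim sum_ah q, of \<sigma> \<mu>] by blast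
  obtain \<zeta>h where Zh: "\<forall>n. 0 < \<zeta>h n \<and> \<zeta>h n < \<rho>h n \<and> \<rho>h n < \<zeta>h (Suc n)"
     "\<forall>n. phiR \<sigma> (-\<mu>) ah \<rho>h a \<rho> (\<zeta>h n) = q" "\<forall>n k. \<zeta>h n \<noteq> \<rho>h k"
     "\<forall>x. 0 < x \<longrightarrow> (\<forall>k. x \<noteq> \<rho>h k) \<longrightarrow> phiR \<sigma> (-\<mu>) ah \<rho>h a \<rho> x = q \<longrightarrow> x \<in> range \<zeta>h"
    using pos_side[OF ah_pos rhoh_pos rhoh_mono rhoh_lim sum_ah a0 rho_pos rho_lim sum_a q, of \<sigma> "-\<mu>"] by blast
  have sw: "phiR \<sigma> (-\<mu>) ah \<rho>h a \<rho> (-x) = phiR \<sigma> \<mu> a \<rho> ah \<rho>h x" for x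
    using phiR_swap[of \<sigma> "-\<mu>" ah \<rho>h a \<rho> x] by simp
  have RP: "laplace_exponent \<sigma> \<mu> a \<rho> ah \<rho>h (complex_of_real x) = complex_of_real (phiR \<sigma> \<mu> a \<rho> ah \<rho>h x)" for x
    by (rule real_phi[OF a0 rho_pos rho_lim sum_a ah0 rhoh_pos rhoh_lim sum_ah])
  have "{z. z \<notin> laplace_poles \<rho> \<rho>h \<and> laplace_exponent \<sigma> \<mu> a \<rho> ah \<rho>h z = complex_of_real q}
             = range (\<lambda>n. complex_of_real (\<zeta> n)) \<union> range (\<lambda>n. - complex_of_real (\<zeta>h n))"
  proof (intro set_eqI iffI)
    fix z assume "z \<in> {z. z \<notin> laplace_poles \<rho> \<rho>h \<and> laplace_exponent \<sigma> \<mu> a \<rho> ah \<rho>h z = complex_of_real q}"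
    hence np: "z \<notin> laplace_poles \<rho> \<rho>h" and e: "laplace_exponent \<sigma> \<mu> a \<rho> ah \<rho>h z = complex_of_real q" by auto
    have "Im z = 0" using nonreal[OF a0 rho_pos rho_lim sum_a ah0 rhoh_pos rhoh_lim sum_ah q] e by blast
    define x where "x = Re z"
    have zx: "z = complex_of_real x" unfolding x_def using \<open>Im z = 0\<close> by (simp add: complex_eq_iff)
    have px: "phiR \<sigma> \<mu> a \<rho> ah \<rho>h x = q" using e RP[of x] zx by simp
    have np1: "\<forall>k. x \<noteq> \<rho> k" using np zx unfolding laplace_poles_def by auto
    have np2: "\<forall>k. -x \<noteq> \<rho>h k"
    proof (intro allI notI)
      fix k assume "-x = \<rho>h k"
      hence "z = - complex_of_real (\<rho>h k)" using zx by (metis minus_minus of_real_minus)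
      thus False using np unfolding laplace_poles_def by auto
    qed
    have "x \<noteq> 0" using px q unfolding phiR_def by auto
    then consider "x > 0" | "x < 0" by linarith
    thus "z \<in> range (\<lambda>n. complex_of_real (\<zeta> n)) \<union> range (\<lambda>n. - complex_of_real (\<zeta>h n))"
    proof cases
      case 1
      then obtain n where "x = \<zeta> n" using Z(4) np1 px by blast
      thus ?thesis using zx by auto
    next
      case 2
      hence "-x > 0" by simp
      moreover have "phiR \<sigma> (-\<mu>) ah \<rho>h a \<rho> (-x) = q" using sw px by simp
      ultimately obtain n where "-x = \<zeta>h n" using Zh(4) np2 by blast
      hence "z = - complex_of_real (\<zeta>h n)" using zx by (metis minus_minus of_real_minus)
      thus ?thesis by auto
    qed
  next
    fix z assume "z \<in> range (\<lambda>n. complex_of_real (\<zeta> n)) \<union> range (\<lambda>n. - complex_of_real (\<zeta>h n))"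
    then consider n where "z = complex_of_real (\<zeta> n)" | n where "z = - complex_of_real (\<zeta>h n)" by auto
    thus "z \<in> {z. z \<notin> laplace_poles \<rho> \<rho>h \<and> laplace_exponent \<sigma> \<mu> a \<rho> ah \<rho>h z = complex_of_real q}"
    proof cases
      case 1
      have "z \<notin> laplace_poles \<rho> \<rho>h"
      proof
        assume "z \<in> laplace_poles \<rho> \<rho>h"
        then obtain k where "z = complex_of_real (\<rho> k) \<or> z = - complex_of_real (\<rho>h k)" unfolding laplace_poles_def by auto
        hence "\<zeta> n = \<rho> k \<or> \<zeta> n = - \<rho>h k" using 1 by (metis of_real_eq_iff of_real_minus)
        thus False using Z(1,3) rhoh_pos[of k] by (metis neg_less_0_iff_less order_less_asym)
      qed
      moreover have "laplace_exponent \<sigma> \<mu> a \<rho> ah \<rho>h z = complex_of_real q" using 1 RP Z(2) by simp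
      ultimately show ?thesis by simp
    next
      case 2
      hence z2: "z = complex_of_real (- \<zeta>h n)" by simp
      have "z \<notin> laplace_poles \<rho> \<rho>h"
      proof
        assume "z \<in> laplace_poles \<rho> \<rho>h"
        then obtain k where "z = complex_of_real (\<rho> k) \<or> z = - complex_of_real (\<rho>h k)" unfolding laplace_poles_def by auto
        hence "- \<zeta>h n = \<rho> k \<or> \<zeta>h n = \<rho>h k" using z2 by (metis of_real_eq_iff of_real_minus minus_minus)
        thus False using Zh(1,3) rho_pos[of k] by (metis neg_less_0_iff_less order_less_asym)
      qed
      moreover have "laplace_exponent \<sigma> \<mu> a \<rho> ah \<rho>h z = complex_of_real q"
        using z2 RP[of "- \<zeta>h n"] Zh(2) sw[of "- \<zeta>h n"] by simp
      ultimately show ?thesis by simp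
    qed
  qed
  thus ?thesis using Z(1) Zh(1) by blast
qed

end
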